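(* In the setting below, assume that (I) $g$ is self-reciprocal, (II) $l$ is self-reciprocal, (III) $\gcd(t_{22},g_{12})=1$, and (IV) $\gcd\big(r_{22},\ g_{11}\bar g_{11}+g_{12}\bar g_{12}\big)=1$. Then for every irreducible factor $h_j$ of $x^m-1$ that is not self-reciprocal, the constituents satisfy $C_j'\cap (C_j'')^{\perp_e}=\{\mathbf 0\}$ and $C_j''\cap (C_j')^{\perp_e}=\{\mathbf 0\}$.
   Context: Let $q$ be a prime power, $F=\mathbb{F}_q$, $m\ge1$ with $\gcd(q,m)=1$. For a nonzero polynomial $f$ of degree $k$, $f^*(x)=x^kf(x^{-1})$; $f$ is self-reciprocal if $f^*=\alpha f$ for some $\alpha\in F$. For a polynomial $f$ of degree at most $m$, $\bar f(x)=x^m f(x^{-1})$. Let $g_{11},g_{12},g_{22}\in F[x]$ satisfy $g_{11}\mid x^m-1$, $g_{22}\mid x^m-1$, $\deg g_{12}<\deg g_{22}$, $g_{11}g_{22}\mid (x^m-1)g_{12}$ (these generate the quasi-cyclic code $C=\langle (g_{11},g_{12}),(0,g_{22})\rangle\subseteq (F[x]/\langle x^m-1\rangle)^2$). Define $g=\gcd(g_{11},g_{22})$, $l=(x^m-1)/\mathrm{lcm}(g_{11},g_{22})$, $g_{11}=g\,g_{11}'$, $g_{22}=g\,g_{22}'$, $r_{22}=\gcd(g_{22}',g_{22}'^* )$, $t_{22}=g_{22}'/r_{22}$. Let $\xi$ be a primitive $m$-th root of unity in an extension of $F$. Let $h_j$ be an irreducible factor of $x^m-1$ over $F$ that is not self-reciprocal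 (so $h_j^*$ is, up to a scalar, a different irreducible factor), and let $\xi^{v_j}$ be a root of $h_j$; let $K_j=F(\xi^{v_j})$. The constituent $C_j'\subseteq K_j^2$ is the $K_j$-span of the rows $(g_{11}(\xi^{v_j}),g_{12}(\xi^{v_j}))$, $(0,g_{22}(\xi^{v_j}))$, and the constituent $C_j''\subseteq K_j^2$ is the $K_j$-span of the rows $(\bar g_{11}(\xi^{v_j}),\bar g_{12}(\xi^{v_j}))$, $(0,\bar g_{22}(\xi^{v_j}))$. For $D\subseteq K_j^2$, $D^{\perp_e}$ is its dual with respect to the standard bilinear form $c_1d_1+c_2d_2$. *)

theory Defs
  imports "HOL-Computational_Algebra.Computational_Algebra"
begin

(* f^*(x) = x^(deg f) f(1/x) : this is exactly the library's reflect_poly *)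
definition recip :: "'a::field poly \<Rightarrow> 'a poly" where
  "recip f = reflect_poly f"

definition self_reciprocal :: "'a::field poly \<Rightarrow> bool" where
  "self_reciprocal f \<longleftrightarrow> f \<noteq> 0 \<and> (\<exists>c. recip f = smult c f)"

(* \bar f(x) = x^m f(1/x) for deg f <= m *)
definition bar :: "nat \<Rightarrow> 'a::field poly \<Rightarrow> 'a poly" where
  "bar m f = (\<Sum>i\<le>m. monom (coeff f i) (m - i))"

definition xm1 :: "nat \<Rightarrow> 'a::field poly" where
  "xm1 m = monom 1 m - 1"

definition field_embedding :: "('a::field \<Rightarrow> 'b::field) \<Rightarrow> bool" where
  "field_embedding \<phi> \<longleftrightarrow> inj \<phi> \<and> \<phi> 0 = 0 \<and> \<phi> 1 = 1 \<and>
     (\<forall>x y. \<phi> (x + y) = \<phi> x + \<phi> y) \<and> (\<forall>x y. \<phi> (x * y) = \<phi> x * \<phi> y)"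

definition gen_subfield :: "('a \<Rightarrow> 'b::field) \<Rightarrow> 'b \<Rightarrow> 'b set" where
  "gen_subfield \<phi> \<alpha> = \<Inter> {S. range \<phi> \<subseteq> S \<and> \<alpha> \<in> S \<and> 0 \<in> S \<and> 1 \<in> S \<and>
       (\<forall>x\<in>S. \<forall>y\<in>S. x + y \<in> S \<and> x * y \<in> S) \<and>
       (\<forall>x\<in>S. - x \<in> S \<and> inverse x \<in> S)}"

definition ev :: "('a::field \<Rightarrow> 'b::field) \<Rightarrow> 'a poly \<Rightarrow> 'b \<Rightarrow> 'b" where
  "ev \<phi> p z = poly (map_poly \<phi> p) z"

definition span2 :: "'b::field set \<Rightarrow> 'b \<times> 'b \<Rightarrow> 'b \<times> 'b \<Rightarrow> ('b \<times> 'b) set" where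
  "span2 K u w = {(s * fst u + t * fst w, s * snd u + t * snd w) | s t. s \<in> K \<and> t \<in> K}"

definition edual :: "'b::field set \<Rightarrow> ('b \<times> 'b) set \<Rightarrow> ('b \<times> 'b) set" where
  "edual K D = {d. fst d \<in> K \<and> snd d \<in> K \<and> (\<forall>c\<in>D. fst c * fst d + snd c * snd d = 0)}"

definition constituent' :: "('a::field \<Rightarrow> 'b::field) \<Rightarrow> 'b set \<Rightarrow> 'b \<Rightarrow> 'a poly \<Rightarrow> 'a poly \<Rightarrow> 'a poly \<Rightarrow> ('b \<times> 'b) set" where
  "constituent' \<phi> K \<alpha> g11 g12 g22 =
     span2 K (ev \<phi> g11 \<alpha>, ev \<phi> g12 \<alpha>) (0, ev \<phi> g22 \<alpha>)"

definition constituent'' :: "nat \<Rightarrow> ('a::field \<Rightarrow> 'b::field) \<Rightarrow> 'b set \<Rightarrow> 'b \<Rightarrow> 'a poly \<Rightarrow> 'a poly \<Rightarrow> 'a poly \<Rightarrow> ('b \<times> 'b) set" where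
  "constituent'' m \<phi> K \<alpha> g11 g12 g22 =
     span2 K (ev \<phi> (bar m g11) \<alpha>, ev \<phi> (bar m g12) \<alpha>) (0, ev \<phi> (bar m g22) \<alpha>)"

end

theory Submission
  imports Defs
begin


lemma emb0: "field_embedding \<phi> \<Longrightarrow> \<phi> 0 = 0" by (simp add: field_embedding_def)
lemma emb1: "field_embedding \<phi> \<Longrightarrow> \<phi> 1 = 1" by (simp add: field_embedding_def)
lemma emb_add: "field_embedding \<phi> \<Longrightarrow> \<phi> (x + y) = \<phi> x + \<phi> y" by (simp add: field_embedding_def)
lemma emb_mult: "field_embedding \<phi> \<Longrightarrow> \<phi> (x * y) = \<phi> x * \<phi> y" by (simp add: field_embedding_def)
lemma emb_inj: "field_embedding \<phi> \<Longrightarrow> \<phi> x = \<phi> y \<longleftrightarrow> x = y" by (auto simp add: field_embedding_def inj_def)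
lemma emb_nz: "field_embedding \<phi> \<Longrightarrow> \<phi> x = 0 \<longleftrightarrow> x = 0"
  by (metis emb0 emb_inj)
lemma emb_uminus: "field_embedding \<phi> \<Longrightarrow> \<phi> (- x) = - \<phi> x"
proof -
  assume e: "field_embedding \<phi>"
  have "\<phi> (- x) + \<phi> x = 0" using emb_add[OF e, of "-x" x] emb0[OF e] by simp
  thus ?thesis by (simp add: eq_neg_iff_add_eq_0)
qed
lemma emb_diff: "field_embedding \<phi> \<Longrightarrow> \<phi> (x - y) = \<phi> x - \<phi> y"
  by (metis diff_conv_add_uminus emb_add emb_uminus)
lemma emb_of_nat: "field_embedding \<phi> \<Longrightarrow> \<phi> (of_nat n) = of_nat n"
  by (induction n) (simp_all add: emb0 emb1 emb_add)

lemma map_poly_add_e: "field_embedding \<phi> \<Longrightarrow> map_poly \<phi> (p + q) = map_poly \<phi> p + map_poly \<phi> q"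
  by (intro poly_eqI) (simp add: coeff_map_poly emb0 emb_add)
lemma map_poly_diff_e: "field_embedding \<phi> \<Longrightarrow> map_poly \<phi> (p - q) = map_poly \<phi> p - map_poly \<phi> q"
  by (intro poly_eqI) (simp add: coeff_map_poly emb0 emb_diff)

lemma ev_add: "field_embedding \<phi> \<Longrightarrow> ev \<phi> (p + q) z = ev \<phi> p z + ev \<phi> q z"
  by (simp add: ev_def map_poly_add_e)
lemma ev_diff: "field_embedding \<phi> \<Longrightarrow> ev \<phi> (p - q) z = ev \<phi> p z - ev \<phi> q z"
  by (simp add: ev_def map_poly_diff_e)
lemma ev_1: "field_embedding \<phi> \<Longrightarrow> ev \<phi> 1 z = 1"
  by (simp add: ev_def emb1)
lemma ev_smult: "field_embedding \<phi> \<Longrightarrow> ev \<phi> (smult c p) z = \<phi> c * ev \<phi> p z"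
  by (simp add: ev_def map_poly_smult emb0 emb_mult)
lemma ev_pCons: "field_embedding \<phi> \<Longrightarrow> ev \<phi> (pCons a p) z = \<phi> a + z * ev \<phi> p z"
  by (simp add: ev_def map_poly_pCons emb0)
lemma ev_mult: assumes e: "field_embedding \<phi>" shows "ev \<phi> (p * q) z = ev \<phi> p z * ev \<phi> q z"
proof (induction p rule: pCons_induct)
  case 0 then show ?case by (simp add: ev_def)
next
  case (pCons a p)
  then show ?case
    by (simp add: mult_pCons_left ev_add[OF e] ev_smult[OF e] ev_pCons[OF e] emb0[OF e] algebra_simps)
qed
lemma ev_monom: "field_embedding \<phi> \<Longrightarrow> ev \<phi> (monom c n) z = \<phi> c * z ^ n"
  by (simp add: ev_def map_poly_monom emb0 poly_monom)
lemma ev_sum: assumes e: "field_embedding \<phi>" shows "ev \<phi> (\<Sum>i\<in>A. f i) z = (\<Sum>i\<in>A. ev \<phi> (f i) z)"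
  by (induction A rule: infinite_finite_induct) (simp_all add: ev_add[OF e], simp_all add: ev_def)

lemma ev_dvd: "field_embedding \<phi> \<Longrightarrow> p dvd q \<Longrightarrow> ev \<phi> p z = 0 \<Longrightarrow> ev \<phi> q z = 0"
  by (auto simp: dvd_def ev_mult)

lemma ev_gcd:
  fixes p q :: "'a::field_gcd poly"
  assumes e: "field_embedding \<phi>"
  shows "ev \<phi> (gcd p q) z = 0 \<longleftrightarrow> ev \<phi> p z = 0 \<and> ev \<phi> q z = 0"
proof
  assume "ev \<phi> (gcd p q) z = 0" then show "ev \<phi> p z = 0 \<and> ev \<phi> q z = 0"
    using ev_dvd[OF e] by (meson gcd_dvd1 gcd_dvd2)
next
  assume h: "ev \<phi> p z = 0 \<and> ev \<phi> q z = 0"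
  have "gcd p q = fst (bezout_coefficients p q) * p + snd (bezout_coefficients p q) * q"
    by (simp add: bezout_coefficients_fst_snd)
  then show "ev \<phi> (gcd p q) z = 0" using h by (simp add: ev_add[OF e] ev_mult[OF e])
qed

lemma map_poly_reflect_e:
  assumes e: "field_embedding \<phi>"
  shows "map_poly \<phi> (reflect_poly p) = reflect_poly (map_poly \<phi> p)"
proof -
  have d: "degree (map_poly \<phi> p) = degree p" by (rule degree_map_poly) (simp add: emb_nz[OF e])
  show ?thesis
    by (intro poly_eqI) (simp add: coeff_map_poly emb0[OF e] coeff_reflect_poly d)
qed

lemma ev_recip:
  assumes e: "field_embedding \<phi>" and z: "z \<noteq> 0"
  shows "ev \<phi> (recip p) z = z ^ degree p * ev \<phi> p (inverse z)"
proof -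
  have d: "degree (map_poly \<phi> p) = degree p" by (rule degree_map_poly) (simp add: emb_nz[OF e])
  show ?thesis unfolding ev_def recip_def map_poly_reflect_e[OF e]
    using poly_reflect_poly_nz[OF z] d by simp
qed

lemma ev_sr:
  assumes e: "field_embedding \<phi>" and z: "z \<noteq> 0" and S: "self_reciprocal S"
  shows "ev \<phi> S z = 0 \<longleftrightarrow> ev \<phi> S (inverse z) = 0"
proof -
  obtain c where c: "recip S = smult c S" and S0: "S \<noteq> 0" using S by (auto simp: self_reciprocal_def)
  have "c \<noteq> 0" using c S0 by (auto simp: recip_def)
  have "\<phi> c * ev \<phi> S z = z ^ degree S * ev \<phi> S (inverse z)"
    using ev_recip[OF e z, of S] c by (simp add: ev_smult[OF e])
  then show ?thesis using \<open>c \<noteq> 0\<close> z emb_nz[OF e, of c] by auto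
qed

lemma ev_bar:
  assumes e: "field_embedding \<phi>" and d: "degree p \<le> m" and z: "z ^ m = 1" and z0: "z \<noteq> 0"
  shows "ev \<phi> (bar m p) z = ev \<phi> p (inverse z)"
proof -
  have dm: "degree (map_poly \<phi> p) = degree p" by (rule degree_map_poly) (simp add: emb_nz[OF e])
  have "ev \<phi> (bar m p) z = (\<Sum>i\<le>m. \<phi> (coeff p i) * z ^ (m - i))"
    by (simp add: bar_def ev_sum[OF e] ev_monom[OF e])
  also have "\<dots> = (\<Sum>i\<le>m. \<phi> (coeff p i) * inverse z ^ i)"
  proof (rule sum.cong[OF refl])
    fix i assume "i \<in> {..m}"
    then have "z ^ (m - i) * z ^ i = 1" using z by (simp add: power_add[symmetric])
    then have "z ^ (m - i) = inverse z ^ i" using z0 by (simp add: power_inverse field_simps)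
    then show "\<phi> (coeff p i) * z ^ (m - i) = \<phi> (coeff p i) * inverse z ^ i" by simp
  qed
  also have "\<dots> = (\<Sum>i\<le>degree p. \<phi> (coeff p i) * inverse z ^ i)"
    using d by (intro sum.mono_neutral_right) (auto simp: coeff_eq_0 emb0[OF e])
  also have "\<dots> = ev \<phi> p (inverse z)"
    unfolding ev_def poly_altdef dm by (simp add: coeff_map_poly emb0[OF e])
  finally show ?thesis .
qed




lemma of_nat_card_zero: "(of_nat (card (UNIV :: 'a::{finite,field} set)) :: 'a) = 0"
proof -
  have "(\<Sum>x\<in>UNIV. x + 1) = (\<Sum>x\<in>(UNIV::'a set). x)"
    by (rule sum.reindex_bij_witness[of _ "\<lambda>x. x - 1" "\<lambda>x. x + 1"]) auto
  then show ?thesis by (simp add: sum.distrib)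
qed

lemma char_ok:
  assumes cop: "coprime (card (UNIV :: 'a::{finite,field} set)) m"
  shows "(of_nat m :: 'a) \<noteq> 0"
proof
  assume m0: "(of_nat m :: 'a) = 0"
  let ?n = "int (card (UNIV :: 'a set))"
  have "gcd ?n (int m) = 1" using cop by (simp add: coprime_iff_gcd_eq_1[symmetric])
  then have "fst (bezout_coefficients ?n (int m)) * ?n + snd (bezout_coefficients ?n (int m)) * int m = 1"
    by (simp add: bezout_coefficients_fst_snd)
  then have "(of_int (fst (bezout_coefficients ?n (int m)) * ?n + snd (bezout_coefficients ?n (int m)) * int m) :: 'a) = 1"
    by simp
  then show False using m0 of_nat_card_zero[where 'a='a] by simp
qed

lemma xm1_nz: "m \<ge> 1 \<Longrightarrow> xm1 m \<noteq> (0::'a::field poly)"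
proof
  assume "m \<ge> 1" "xm1 m = (0::'a poly)"
  then have "coeff (xm1 m :: 'a poly) m = 0" by simp
  then show False using \<open>m \<ge> 1\<close> by (simp add: xm1_def)
qed

lemma xm1_deg: "degree (xm1 m :: 'a::field poly) \<le> m"
  unfolding xm1_def by (rule order.trans[OF degree_diff_le]) (auto simp: degree_monom_le)

lemma dvd_xm1_deg: "m \<ge> 1 \<Longrightarrow> p dvd xm1 m \<Longrightarrow> degree (p::'a::field poly) \<le> m"
  by (metis dvd_imp_degree_le xm1_deg xm1_nz order.trans)



lemma simple_root:
  fixes f u :: "'a::field poly"
  assumes e: "field_embedding \<phi>" and fu: "f * u = xm1 m" and z: "z ^ m = 1" and z0: "z \<noteq> 0"
    and m: "m \<ge> 1" and ch: "(of_nat m :: 'a) \<noteq> 0"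
  shows "\<not> (ev \<phi> f z = 0 \<and> ev \<phi> u z = 0)"
proof
  assume h: "ev \<phi> f z = 0 \<and> ev \<phi> u z = 0"
  let ?F = "map_poly \<phi> f" and ?U = "map_poly \<phi> u"
  obtain A where A: "?F = [:-z,1:] * A" using h poly_eq_0_iff_dvd unfolding ev_def dvd_def by blast
  obtain B where B: "?U = [:-z,1:] * B" using h poly_eq_0_iff_dvd unfolding ev_def dvd_def by blast
  have "map_poly \<phi> (xm1 m) = monom 1 m - 1"
    by (simp add: xm1_def map_poly_diff_e[OF e] map_poly_monom emb0[OF e] emb1[OF e])
  moreover have "map_poly \<phi> (f * u) = ?F * ?U"
  proof (induction f rule: pCons_induct)
    case 0 then show ?case by simp
  next
    case (pCons a p)
    then show ?case
      by (simp add: mult_pCons_left map_poly_add_e[OF e] map_poly_smult emb0[OF e] emb_mult[OF e]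
          map_poly_pCons)
  qed
  ultimately have eq: "monom 1 m - 1 = [:-z,1:] * A * ([:-z,1:] * B)" using fu A B by simp
  have "poly (pderiv (monom 1 m - 1)) z = 0"
    unfolding eq by (simp add: pderiv_mult)
  then have "of_nat m * z ^ (m - 1) = (0::'b)"
    by (simp add: pderiv_diff pderiv_monom poly_monom)
  then have "(of_nat m :: 'b) = 0" using z0 by simp
  then have "\<phi> (of_nat m) = 0" by (simp add: emb_of_nat[OF e])
  then show False using ch emb_nz[OF e] by blast
qed



lemma span_dual:
  fixes a b c a' b' c' :: "'b::field"
  assumes K: "0 \<in> K" "1 \<in> K"
    and x1: "x \<in> span2 K (a,b) (0,c)" and x2: "x \<in> edual K (span2 K (a',b') (0,c'))"
    and cond: "(a=0 \<and> b=0 \<and> c=0) \<or> (a'\<noteq>0 \<and> c'\<noteq>0) \<or> (a=0 \<and> (b'\<noteq>0 \<or> c'\<noteq>0))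
               \<or> (c=0 \<and> ((b\<noteq>0 \<and> c'\<noteq>0) \<or> a*a'+b*b'\<noteq>0))"
  shows "x = (0,0)"
proof -
  obtain s t where x: "x = (s*a, s*b + t*c)" using x1 by (auto simp: span2_def)
  have "(a',b') = (1 * fst (a',b') + 0 * fst (0::'b,c'), 1 * snd (a',b') + 0 * snd (0::'b,c'))" by simp
  then have "(a',b') \<in> span2 K (a',b') (0,c')"
    unfolding span2_def using K by blast
  then have o1: "a' * fst x + b' * snd x = 0" using x2 by (auto simp: edual_def)
  have "(0,c') = (0 * fst (a',b') + 1 * fst (0::'b,c'), 0 * snd (a',b') + 1 * snd (0::'b,c'))" by simp
  then have "(0,c') \<in> span2 K (a',b') (0,c')"
    unfolding span2_def using K by blast
  then have o2: "c' * snd x = 0" using x2 by (auto simp: edual_def)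
  consider "a=0 \<and> b=0 \<and> c=0" | "a'\<noteq>0 \<and> c'\<noteq>0" | "a=0 \<and> (b'\<noteq>0 \<or> c'\<noteq>0)"
    | "c=0 \<and> ((b\<noteq>0 \<and> c'\<noteq>0) \<or> a*a'+b*b'\<noteq>0)" using cond by blast
  then show ?thesis
  proof cases
    case 1 then show ?thesis using x by simp
  next
    case 2 then show ?thesis using o1 o2 by (cases x) simp
  next
    case 3 then show ?thesis using o1 o2 x by auto
  next
    case 4
    then have x': "x = (s*a, s*b)" using x by simp
    from 4 consider "b\<noteq>0 \<and> c'\<noteq>0" | "a*a'+b*b'\<noteq>0" by blast
    then have "s = 0"
    proof cases
      case 1 then show ?thesis using o2 x' by simp
    next
      case 2
      have "s * (a*a'+b*b') = 0" using o1 x' by (simp add: algebra_simps)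
      then show ?thesis using 2 by simp
    qed
    then show ?thesis using x' by simp
  qed
qed

lemma inter_zero:
  assumes K: "0 \<in> K" "1 \<in> K"
    and cond: "(a=0 \<and> b=0 \<and> c=0) \<or> (a'\<noteq>0 \<and> c'\<noteq>0) \<or> (a=0 \<and> (b'\<noteq>0 \<or> c'\<noteq>0))
               \<or> (c=0 \<and> ((b\<noteq>0 \<and> c'\<noteq>0) \<or> a*a'+b*b'\<noteq>0))"
  shows "span2 K (a,b) (0,c) \<inter> edual K (span2 K (a',b') (0,c')) = {(0::'b::field,0)}"
proof
  show "span2 K (a,b) (0,c) \<inter> edual K (span2 K (a',b') (0,c')) \<subseteq> {(0,0)}"
    using span_dual[OF K _ _ cond] by blast
  have "(0,0) = (0 * fst (a,b) + 0 * fst (0::'b,c), 0 * snd (a,b) + 0 * snd (0::'b,c))" by simp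
  then have "(0,0) \<in> span2 K (a,b) (0,c)" unfolding span2_def using K by blast
  moreover have "(0,0) \<in> edual K (span2 K (a',b') (0,c'))" using K by (simp add: edual_def)
  ultimately show "{(0,0)} \<subseteq> span2 K (a,b) (0,c) \<inter> edual K (span2 K (a',b') (0,c'))" by simp
qed




theorem lemma3p7:
  fixes m :: nat and g11 g12 g22 h :: "'a::{finite,field_gcd} poly"
    and \<phi> :: "'a \<Rightarrow> 'b::field" and \<xi> :: 'b and v :: nat
  assumes m: "m \<ge> 1" and cop: "coprime (card (UNIV :: 'a set)) m"
    and d11: "g11 dvd xm1 m" and d22: "g22 dvd xm1 m"
    and deg12: "g12 = 0 \<or> degree g12 < degree g22"
    and dprod: "g11 * g22 dvd xm1 m * g12"
    and emb: "field_embedding \<phi>"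
    and xi: "\<xi> ^ m = 1" "\<forall>k. 0 < k \<and> k < m \<longrightarrow> \<xi> ^ k \<noteq> 1"
    and I: "self_reciprocal (gcd g11 g22)"
    and II: "self_reciprocal (xm1 m div lcm g11 g22)"
    and III: "gcd (g22 div gcd g11 g22 div gcd (g22 div gcd g11 g22) (recip (g22 div gcd g11 g22))) g12 = 1"
    and IV: "gcd (gcd (g22 div gcd g11 g22) (recip (g22 div gcd g11 g22)))
                  (g11 * bar m g11 + g12 * bar m g12) = 1"
    and hirr: "irreducible h" and hdvd: "h dvd xm1 m" and hnsr: "\<not> self_reciprocal h"
    and root: "ev \<phi> h (\<xi> ^ v) = 0"
  shows "constituent' \<phi> (gen_subfield \<phi> (\<xi> ^ v)) (\<xi> ^ v) g11 g12 g22 \<inter>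
           edual (gen_subfield \<phi> (\<xi> ^ v)) (constituent'' m \<phi> (gen_subfield \<phi> (\<xi> ^ v)) (\<xi> ^ v) g11 g12 g22)
           = {(0, 0)}
       \<and> constituent'' m \<phi> (gen_subfield \<phi> (\<xi> ^ v)) (\<xi> ^ v) g11 g12 g22 \<inter>
           edual (gen_subfield \<phi> (\<xi> ^ v)) (constituent' \<phi> (gen_subfield \<phi> (\<xi> ^ v)) (\<xi> ^ v) g11 g12 g22)
           = {(0, 0)}"
proof -
  define \<alpha> where "\<alpha> = \<xi> ^ v"
  define \<beta> where "\<beta> = inverse \<alpha>"
  define K where "K = gen_subfield \<phi> \<alpha>"
  have K: "0 \<in> K" "1 \<in> K" unfolding K_def gen_subfield_def by blast+
  have am: "\<alpha> ^ m = 1" unfolding \<alpha>_def using xi(1) by (metis power_mult power_mult_distrib power_one mult.commute power_mult[symmetric])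
  have a0: "\<alpha> \<noteq> 0" using am m by (metis one_neq_zero power_0_left not_one_le_zero)
  have bm: "\<beta> ^ m = 1" unfolding \<beta>_def using am by (simp add: power_inverse)
  have b0: "\<beta> \<noteq> 0" unfolding \<beta>_def using a0 by simp
  have ib: "inverse \<beta> = \<alpha>" unfolding \<beta>_def by simp
  have ch: "(of_nat m :: 'a) \<noteq> 0" by (rule char_ok[OF cop])
  have zs: "z ^ m = 1 \<and> z \<noteq> 0" if "z = \<alpha> \<or> z = \<beta>" for z using that am a0 bm b0 by auto

  have dg11: "degree g11 \<le> m" using dvd_xm1_deg[OF m d11] .
  have dg22: "degree g22 \<le> m" using dvd_xm1_deg[OF m d22] .
  have dg12: "degree g12 \<le> m" using deg12 dg22 by auto

  define g where "g = gcd g11 g22"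
  define L where "L = lcm g11 g22"
  define l where "l = xm1 m div L"
  define g22' where "g22' = g22 div g"
  define r where "r = gcd g22' (recip g22')"
  define t where "t = g22' div r"
  define P where "P = g11 * bar m g11 + g12 * bar m g12"

  note Zmult = ev_mult[OF emb]
  have xmz: "ev \<phi> (xm1 m) z = 0" if "z ^ m = 1" for z
    using that by (simp add: xm1_def ev_diff[OF emb] ev_monom[OF emb] ev_1[OF emb] emb1[OF emb])

  have Lxm: "L * l = xm1 m" unfolding l_def L_def by (rule dvd_mult_div_cancel) (rule lcm_least[OF d11 d22])
  have g22e: "g22 = g * g22'" unfolding g22'_def g_def by (simp add: dvd_mult_div_cancel)
  have g22'e: "g22' = r * t" unfolding t_def r_def by (simp add: dvd_mult_div_cancel)
  have g11nz: "g11 \<noteq> 0" using d11 xm1_nz[OF m] by auto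
  obtain u where u: "xm1 m = g11 * u" using d11 by (auto simp: dvd_def)
  obtain k where k: "xm1 m * g12 = g11 * g22 * k" using dprod by (auto simp: dvd_def)
  have ug: "u * g12 = g22 * k" using u k g11nz by (simp add: mult.assoc)

  have F: "(ev \<phi> L z = 0 \<longleftrightarrow> ev \<phi> g11 z = 0 \<or> ev \<phi> g22 z = 0)
      \<and> (ev \<phi> L z = 0 \<longleftrightarrow> ev \<phi> l z \<noteq> 0)
      \<and> (ev \<phi> g z = 0 \<longleftrightarrow> ev \<phi> g11 z = 0 \<and> ev \<phi> g22 z = 0)
      \<and> (ev \<phi> g22 z = 0 \<longleftrightarrow> ev \<phi> g z = 0 \<or> ev \<phi> g22' z = 0)
      \<and> (ev \<phi> g22' z = 0 \<longleftrightarrow> ev \<phi> r z = 0 \<or> ev \<phi> t z = 0)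
      \<and> (ev \<phi> r z = 0 \<longleftrightarrow> ev \<phi> g22' z = 0 \<and> ev \<phi> (recip g22') z = 0)
      \<and> \<not> (ev \<phi> t z = 0 \<and> ev \<phi> g12 z = 0)
      \<and> \<not> (ev \<phi> r z = 0 \<and> ev \<phi> P z = 0)
      \<and> (ev \<phi> g11 z = 0 \<and> ev \<phi> g22 z = 0 \<longrightarrow> ev \<phi> g12 z = 0)"
    if z: "z ^ m = 1" "z \<noteq> 0" for z
  proof (intro conjI)
    show "ev \<phi> L z = 0 \<longleftrightarrow> ev \<phi> g11 z = 0 \<or> ev \<phi> g22 z = 0"
    proof
      assume "ev \<phi> L z = 0"
      moreover have "L dvd g11 * g22" unfolding L_def by (rule lcm_least) auto
      ultimately show "ev \<phi> g11 z = 0 \<or> ev \<phi> g22 z = 0" using ev_dvd[OF emb] Zmult by fastforce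
    next
      assume "ev \<phi> g11 z = 0 \<or> ev \<phi> g22 z = 0"
      then show "ev \<phi> L z = 0" unfolding L_def using ev_dvd[OF emb] by (meson dvd_lcm1 dvd_lcm2)
    qed
    show "ev \<phi> L z = 0 \<longleftrightarrow> ev \<phi> l z \<noteq> 0"
      using simple_root[OF emb Lxm z m ch] xmz[OF z(1)] Lxm Zmult by (metis mult_eq_0_iff)
    show "ev \<phi> g z = 0 \<longleftrightarrow> ev \<phi> g11 z = 0 \<and> ev \<phi> g22 z = 0"
      unfolding g_def by (rule ev_gcd[OF emb])
    show "ev \<phi> g22 z = 0 \<longleftrightarrow> ev \<phi> g z = 0 \<or> ev \<phi> g22' z = 0"
      by (subst g22e) (simp add: Zmult)
    show "ev \<phi> g22' z = 0 \<longleftrightarrow> ev \<phi> r z = 0 \<or> ev \<phi> t z = 0"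
      by (subst g22'e) (simp add: Zmult)
    show "ev \<phi> r z = 0 \<longleftrightarrow> ev \<phi> g22' z = 0 \<and> ev \<phi> (recip g22') z = 0"
      unfolding r_def by (rule ev_gcd[OF emb])
    show "\<not> (ev \<phi> t z = 0 \<and> ev \<phi> g12 z = 0)"
      using III ev_gcd[OF emb, of t g12 z] ev_1[OF emb]
      unfolding t_def r_def g22'_def g_def by auto
    show "\<not> (ev \<phi> r z = 0 \<and> ev \<phi> P z = 0)"
      using IV ev_gcd[OF emb, of r P z] ev_1[OF emb]
      unfolding P_def r_def g22'_def g_def by auto
    show "ev \<phi> g11 z = 0 \<and> ev \<phi> g22 z = 0 \<longrightarrow> ev \<phi> g12 z = 0"
    proof
      assume h: "ev \<phi> g11 z = 0 \<and> ev \<phi> g22 z = 0"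
      have "ev \<phi> u z \<noteq> 0" using simple_root[OF emb u[symmetric] z m ch] h by blast
      moreover have "ev \<phi> (u * g12) z = 0" using ug h Zmult by simp
      ultimately show "ev \<phi> g12 z = 0" using Zmult by simp
    qed
  qed
  note Fa = F[OF am a0] and Fb = F[OF bm b0]
  have Igs: "ev \<phi> g \<alpha> = 0 \<longleftrightarrow> ev \<phi> g \<beta> = 0" unfolding g_def \<beta>_def by (rule ev_sr[OF emb a0 I])
  have IIls: "ev \<phi> l \<alpha> = 0 \<longleftrightarrow> ev \<phi> l \<beta> = 0" unfolding l_def L_def \<beta>_def by (rule ev_sr[OF emb a0 II])
  have rca: "ev \<phi> (recip g22') \<alpha> = 0 \<longleftrightarrow> ev \<phi> g22' \<beta> = 0"
    using ev_recip[OF emb a0, of g22'] a0 unfolding \<beta>_def by simp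
  have rcb: "ev \<phi> (recip g22') \<beta> = 0 \<longleftrightarrow> ev \<phi> g22' \<alpha> = 0"
    using ev_recip[OF emb b0, of g22'] b0 ib by simp
  have bar_a: "ev \<phi> (bar m f) \<alpha> = ev \<phi> f \<beta>" if "degree f \<le> m" for f
    using ev_bar[OF emb that am a0] unfolding \<beta>_def .
  have bar_b: "ev \<phi> (bar m f) \<beta> = ev \<phi> f \<alpha>" if "degree f \<le> m" for f
    using ev_bar[OF emb that bm b0] ib by simp
  have Pa: "ev \<phi> P \<alpha> = ev \<phi> g11 \<alpha> * ev \<phi> g11 \<beta> + ev \<phi> g12 \<alpha> * ev \<phi> g12 \<beta>"
    unfolding P_def by (simp add: ev_add[OF emb] Zmult bar_a dg11 dg12)
  have Pb: "ev \<phi> P \<beta> = ev \<phi> g11 \<alpha> * ev \<phi> g11 \<beta> + ev \<phi> g12 \<alpha> * ev \<phi> g12 \<beta>"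
    unfolding P_def by (simp add: ev_add[OF emb] Zmult bar_b dg11 dg12 mult.commute)

  define a where "a = ev \<phi> g11 \<alpha>"
  define b where "b = ev \<phi> g12 \<alpha>"
  define c where "c = ev \<phi> g22 \<alpha>"
  define a' where "a' = ev \<phi> g11 \<beta>"
  define b' where "b' = ev \<phi> g12 \<beta>"
  define c' where "c' = ev \<phi> g22 \<beta>"
  have C1: "constituent' \<phi> K \<alpha> g11 g12 g22 = span2 K (a,b) (0,c)"
    unfolding constituent'_def a_def b_def c_def ..
  have C2: "constituent'' m \<phi> K \<alpha> g11 g12 g22 = span2 K (a',b') (0,c')"
    unfolding constituent''_def a'_def b'_def c'_def by (simp add: bar_a dg11 dg12 dg22)
  have cond: "((a=0 \<and> b=0 \<and> c=0) \<or> (a'\<noteq>0 \<and> c'\<noteq>0) \<or> (a=0 \<and> (b'\<noteq>0 \<or> c'\<noteq>0))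
               \<or> (c=0 \<and> ((b\<noteq>0 \<and> c'\<noteq>0) \<or> a*a'+b*b'\<noteq>0))) \<and> ((a'=0 \<and> b'=0 \<and> c'=0) \<or> (a\<noteq>0 \<and> c\<noteq>0) \<or> (a'=0 \<and> (b\<noteq>0 \<or> c\<noteq>0))
               \<or> (c'=0 \<and> ((b'\<noteq>0 \<and> c\<noteq>0) \<or> a'*a+b'*b\<noteq>0)))"
  proof -
    note fa = Fa[folded a_def b_def c_def a'_def b'_def c'_def]
    note fb = Fb[folded a_def b_def c_def a'_def b'_def c'_def]
    have P1: "ev \<phi> P \<alpha> \<noteq> 0 \<Longrightarrow> a*a'+b*b' \<noteq> 0" using Pa by (simp add: a_def b_def a'_def b'_def)
    have P3: "a'*a+b'*b = a*a'+b*b'" by (simp add: mult.commute)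
    consider "a=0 \<and> c=0" | "a\<noteq>0 \<and> c\<noteq>0" | "a=0 \<and> c\<noteq>0" | "a\<noteq>0 \<and> c=0" by blast
    then show ?thesis
    proof cases
      case 1
      have "b = 0" using 1 fa by blast
      have "ev \<phi> g \<alpha> = 0" using 1 fa by blast
      then have "ev \<phi> g \<beta> = 0" using Igs by blast
      then have "a' = 0 \<and> c' = 0" using fb by blast
      then have "b' = 0" using fb by blast
      show ?thesis using 1 \<open>b=0\<close> \<open>b'=0\<close> \<open>a' = 0 \<and> c' = 0\<close> by blast
    next
      case 2
      have "ev \<phi> L \<alpha> \<noteq> 0" using 2 fa by blast
      then have "ev \<phi> l \<alpha> = 0" using fa by blast
      then have "ev \<phi> l \<beta> = 0" using IIls by blast
      then have "ev \<phi> L \<beta> \<noteq> 0" using fb by blast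
      then have "a' \<noteq> 0 \<and> c' \<noteq> 0" using fb by blast
      then show ?thesis using 2 by blast
    next
      case 3
      have "ev \<phi> L \<alpha> = 0" using 3 fa by blast
      then have "ev \<phi> l \<alpha> \<noteq> 0" using fa by blast
      then have "ev \<phi> l \<beta> \<noteq> 0" using IIls by blast
      then have "ev \<phi> L \<beta> = 0" using fb by blast
      then have ac: "a' = 0 \<or> c' = 0" using fb by blast
      have "ev \<phi> g \<alpha> \<noteq> 0" using 3 fa by blast
      then have gb: "ev \<phi> g \<beta> \<noteq> 0" using Igs by blast
      show ?thesis
      proof (cases "a' = 0")
        case True
        then have "c' \<noteq> 0" using gb fb by blast
        then show ?thesis using 3 True by blast
      next
        case False
        then have c'0: "c' = 0" using ac by blast
        then have "ev \<phi> g22' \<beta> = 0" using gb fb by blast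
        have "ev \<phi> g22' \<alpha> \<noteq> 0" using 3 fa by blast
        then have "ev \<phi> (recip g22') \<beta> \<noteq> 0" using rcb by blast
        then have "ev \<phi> r \<beta> \<noteq> 0" using fb by blast
        then have "ev \<phi> t \<beta> = 0" using fb \<open>ev \<phi> g22' \<beta> = 0\<close> by blast
        then have "b' \<noteq> 0" using fb by blast
        then show ?thesis using 3 c'0 by blast
      qed
    next
      case 4
      have "ev \<phi> L \<alpha> = 0" using 4 fa by blast
      then have "ev \<phi> l \<alpha> \<noteq> 0" using fa by blast
      then have "ev \<phi> l \<beta> \<noteq> 0" using IIls by blast
      then have "ev \<phi> L \<beta> = 0" using fb by blast
      then have ac: "a' = 0 \<or> c' = 0" using fb by blast
      have "ev \<phi> g \<alpha> \<noteq> 0" using 4 fa by blast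
      then have gb: "ev \<phi> g \<beta> \<noteq> 0" using Igs by blast
      have ga: "ev \<phi> g22' \<alpha> = 0" using 4 \<open>ev \<phi> g \<alpha> \<noteq> 0\<close> fa by blast
      show ?thesis
      proof (cases "a' = 0")
        case True
        then have "c' \<noteq> 0" using gb fb by blast
        then have "ev \<phi> g22' \<beta> \<noteq> 0" using fb by blast
        then have "ev \<phi> (recip g22') \<alpha> \<noteq> 0" using rca by blast
        then have "ev \<phi> r \<alpha> \<noteq> 0" using fa by blast
        then have "ev \<phi> t \<alpha> = 0" using fa ga by blast
        then have "b \<noteq> 0" using fa by blast
        then show ?thesis using 4 True \<open>c' \<noteq> 0\<close> by blast
      next
        case False
        then have c'0: "c' = 0" using ac by blast
        then have "ev \<phi> g22' \<beta> = 0" using gb fb by blast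
        then have "ev \<phi> (recip g22') \<alpha> = 0" using rca by blast
        then have "ev \<phi> r \<alpha> = 0" using fa ga by blast
        then have "ev \<phi> P \<alpha> \<noteq> 0" using fa by blast
        then have "a*a'+b*b' \<noteq> 0" by (rule P1)
        moreover have "a'*a+b'*b \<noteq> 0" using P3 \<open>a*a'+b*b' \<noteq> 0\<close> by metis
        ultimately show ?thesis using 4 c'0 by blast
      qed
    qed
  qed
  show ?thesis
    unfolding \<alpha>_def[symmetric] K_def[symmetric] C1 C2
    using inter_zero[OF K cond[THEN conjunct1]] inter_zero[OF K cond[THEN conjunct2]] by simp
qed


end
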